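(* Let $n,d,k\in\mathbb{N}$, $\lambda,z\ge1$, $\beta\in(0,1]$ and $\xi\ge1$ such that $n\ge m$, where $m=k\cdot\lfloor 1+40^{z/2}\cdot2\xi/k\rfloor$. Let $\mathsf{M}\colon(\mathcal{B}_d)^n\to(\mathcal{B}_d)^{k+1}$ be a $(\lambda,\xi,\beta)$-approximation algorithm for $(k+1,z)$-clustering. Let $\widetilde{\mathsf{M}}\colon\{-1,1\}^{m\times d}\to\{-1,1\}^d$ be the mechanism that on input $x_1,\dots,x_m\in\{-1,1\}^d$ computes $(c_1,\dots,c_{k+1})=\mathsf{M}\big(\tfrac1{\sqrt d}x_1,\dots,\tfrac1{\sqrt d}x_m,\vec0,\dots,\vec0\big)$ (with $n-m$ copies of the zero vector), samples $j$ uniformly from $[k+1]$, and outputs $\mathrm{sign}(c_j)$. Then $\widetilde{\mathsf{M}}$ is $\left(k,\ \alpha=\frac1{160\cdot(2\lambda)^{2/z}},\ \frac{\beta}{k+1}\right)$-weakly-accurate.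
   Context: $\mathcal{B}_d=\{x\in\mathbb{R}^d:\|x\|_2\le1\}$. For $S\in(\mathcal{B}_d)^n$ and $C=(c_1,\dots,c_K)$, $\mathrm{COST}_z(C;S)=\sum_{x\in S}\min_{i\in[K]}\|x-c_i\|_2^z$ and $\mathrm{OPT}_{K,z}(S)=\min_{C\in(\mathbb{R}^d)^K}\mathrm{COST}_z(C;S)$. $\mathsf{M}$ is a $(\lambda,\xi,\beta)$-approximation algorithm for $(K,z)$-clustering if for every $S$, $\Pr_{C\sim\mathsf{M}(S)}[\mathrm{COST}_z(C;S)\le\lambda\mathrm{OPT}_{K,z}(S)+\xi]\ge\beta$. $\mathrm{sign}(u)=1$ if $u\ge0$ and $-1$ otherwise, coordinatewise. For a matrix $Z\in\{-1,1\}^{m'\times d}$ and $b\in\{-1,1\}$, $\mathcal{J}_Z^b$ is the set of columns all of whose entries equal $b$; $q$ strongly-agrees with $Z$ if $|\{j\in\mathcal{J}_Z^b:q^j=b\}|\ge0.9|\mathcal{J}_Z^b|$ for both $b$. A mechanism on $\{-1,1\}^{m\times d}$ ($k\mid m$) is $(k,\alpha,\beta')$-weakly-accurate if for every $X=(x_1,\dots,x_m)$ such that for all $t\in[k]$ and $b$, $|\mathcal{J}^b_{X_t}|\ge\frac12(1-\alpha)d$ with $X_t=(x_{(t-1)m/k+1},\dots,x_{tm/k})$, the probability that its output strongly-agrees with some $X_t$ is at least $\beta'$. *)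

theory Defs
  imports "HOL-Probability.Probability"
begin

(* Points of R^d are vectors real^'d; d = CARD('d).
   A dataset S in (B_d)^n is a list of length n of points in cball 0 1.
   A tuple of K centers (c_1,...,c_K) is a function C :: nat => real^'d,
   where only C 0, ..., C (K-1) matter (index shift [K] ~ {0..<K}). *)

definition cost_z :: "nat \<Rightarrow> real \<Rightarrow> (nat \<Rightarrow> real^'d) \<Rightarrow> (real^'d) list \<Rightarrow> real" where
  "cost_z K z C S = (\<Sum>x\<leftarrow>S. Min ((\<lambda>i. norm (x - C i) powr z) ` {..<K}))"

definition opt_z :: "nat \<Rightarrow> real \<Rightarrow> (real^'d) list \<Rightarrow> real" where
  "opt_z K z S = (INF C \<in> (UNIV :: (nat \<Rightarrow> real^'d) set). cost_z K z C S)"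

definition in_ball_data :: "nat \<Rightarrow> (real^'d) list \<Rightarrow> bool" where
  "in_ball_data n S \<longleftrightarrow> length S = n \<and> set S \<subseteq> cball 0 1"

definition clustering_mechanism ::
  "nat \<Rightarrow> nat \<Rightarrow> ((real^'d) list \<Rightarrow> (nat \<Rightarrow> real^'d) measure) \<Rightarrow> bool" where
  "clustering_mechanism n K M \<longleftrightarrow>
     (\<forall>S. in_ball_data n S \<longrightarrow>
        prob_space (M S) \<and> sets (M S) = sets borel \<and>
        (AE C in M S. \<forall>i<K. C i \<in> cball 0 1))"

definition approx_alg ::
  "nat \<Rightarrow> nat \<Rightarrow> real \<Rightarrow> real \<Rightarrow> real \<Rightarrow> real \<Rightarrow>
   ((real^'d) list \<Rightarrow> (nat \<Rightarrow> real^'d) measure) \<Rightarrow> bool" where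
  "approx_alg n K z lam xi beta M \<longleftrightarrow>
     (\<forall>S. in_ball_data n S \<longrightarrow>
        measure (M S) {C. cost_z K z C S \<le> lam * opt_z K z S + xi} \<ge> beta)"

definition vsign :: "real^'d \<Rightarrow> real^'d" where
  "vsign u = (\<chi> i. if u $ i \<ge> 0 then 1 else -1)"

definition pm1_vec :: "real^'d \<Rightarrow> bool" where
  "pm1_vec x \<longleftrightarrow> (\<forall>i. x $ i = 1 \<or> x $ i = -1)"

(* columns of the matrix Z (rows = list elements) all of whose entries equal b *)
definition Jcols :: "(real^'d) list \<Rightarrow> real \<Rightarrow> 'd set" where
  "Jcols Z b = {j. \<forall>z\<in>set Z. z $ j = b}"

definition strongly_agrees :: "real^'d \<Rightarrow> (real^'d) list \<Rightarrow> bool" where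
  "strongly_agrees q Z \<longleftrightarrow>
     (\<forall>b\<in>{-1, 1::real}. real (card {j\<in>Jcols Z b. q $ j = b}) \<ge> 0.9 * real (card (Jcols Z b)))"

(* X_t for t in {0..<k} (index shift of [k]) *)
definition block :: "nat \<Rightarrow> nat \<Rightarrow> (real^'d) list \<Rightarrow> (real^'d) list" where
  "block k t X = take (length X div k) (drop (t * (length X div k)) X)"

definition weakly_accurate ::
  "nat \<Rightarrow> nat \<Rightarrow> real \<Rightarrow> real \<Rightarrow> ((real^'d) list \<Rightarrow> (real^'d) measure) \<Rightarrow> bool" where
  "weakly_accurate m k alpha beta' Mt \<longleftrightarrow>
     (\<forall>X. length X = m \<and> (\<forall>x\<in>set X. pm1_vec x) \<and>
        (\<forall>t<k. \<forall>b\<in>{-1, 1::real}.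
            real (card (Jcols (block k t X) b)) \<ge> 1/2 * (1 - alpha) * real CARD('d))
      \<longrightarrow> measure (Mt X) {q. \<exists>t<k. strongly_agrees q (block k t X)} \<ge> beta')"

definition tilde_mech ::
  "nat \<Rightarrow> nat \<Rightarrow> nat \<Rightarrow> ((real^'d) list \<Rightarrow> (nat \<Rightarrow> real^'d) measure) \<Rightarrow>
   (real^'d) list \<Rightarrow> (real^'d) measure" where
  "tilde_mech n m k M X =
     distr (M (map (\<lambda>x. (1 / sqrt (real CARD('d))) *\<^sub>R x) X @ replicate (n - m) 0)
              \<Otimes>\<^sub>M uniform_count_measure {0..k})
           borel (\<lambda>(C, j). vsign (C j))"

end

theory Submission
  imports Defs
begin


lemma norm_sq_vec: fixes v :: "real^'d::finite"
  shows "(norm v)^2 = (\<Sum>i\<in>UNIV. (v$i)^2)"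
  by (simp add: norm_vec_def L2_set_def sum_nonneg)

lemma powr_sq: fixes u z :: real assumes "u \<ge> 0" shows "u powr z = (u^2) powr (z/2)"
proof (cases "u = 0")
  case True then show ?thesis by simp
next
  case False
  then have "u^2 = u powr 2" using assms by (simp add: powr_realpow)
  then show ?thesis by (simp add: powr_powr)
qed

lemma vsign_ne: fixes c :: "real^'d::finite"
  assumes "b \<in> {-1, 1::real}" "vsign c $ j \<noteq> b" "s > 0"
  shows "(s * b - c $ j)^2 \<ge> s^2"
proof -
  have "b = 1 \<and> c $ j < 0 \<or> b = -1 \<and> c $ j \<ge> 0" using assms by (auto simp: vsign_def split: if_splits)
  then have "\<bar>s * b - c $ j\<bar> \<ge> s" using assms(3) by auto
  then show ?thesis using assms(3) by (metis abs_of_pos power2_abs power_mono less_le)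
qed

lemma lower_point: fixes c x :: "real^'d::finite"
  assumes "x \<in> set Z" "\<not> strongly_agrees (vsign c) Z" "s > 0"
  shows "\<exists>b\<in>{-1,1::real}. (norm (s *\<^sub>R x - c))^2 \<ge> 0.1 * real (card (Jcols Z b)) * s^2"
proof -
  obtain b where b: "b \<in> {-1,1::real}" and lt: "real (card {j\<in>Jcols Z b. vsign c $ j = b}) < 0.9 * real (card (Jcols Z b))"
    using assms(2) unfolding strongly_agrees_def by force
  define J where "J = Jcols Z b"
  define D where "D = {j\<in>J. vsign c $ j \<noteq> b}"
  define E where "E = {j\<in>J. vsign c $ j = b}"
  have "J = D \<union> E" "D \<inter> E = {}" unfolding D_def E_def by auto
  then have "card J = card D + card E" by (simp add: card_Un_disjoint)
  then have cD: "real (card D) \<ge> 0.1 * real (card J)" using lt unfolding E_def J_def by simp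
  have "(\<Sum>i\<in>D. s^2) \<le> (\<Sum>i\<in>D. (s * x $ i - c $ i)^2)"
  proof (rule sum_mono)
    fix i assume "i \<in> D"
    then have "x $ i = b" "vsign c $ i \<noteq> b" using assms(1) unfolding D_def J_def Jcols_def by auto
    then show "s^2 \<le> (s * x $ i - c $ i)^2" using vsign_ne[OF b _ assms(3)] by simp
  qed
  also have "\<dots> \<le> (\<Sum>i\<in>UNIV. (s * x $ i - c $ i)^2)" by (rule sum_mono2) auto
  also have "\<dots> = (norm (s *\<^sub>R x - c))^2" by (simp add: norm_sq_vec)
  finally have "real (card D) * s^2 \<le> (norm (s *\<^sub>R x - c))^2" by simp
  moreover have "0.1 * real (card J) * s^2 \<le> real (card D) * s^2" using mult_right_mono[OF cD, of "s^2"] by simp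
  ultimately show ?thesis using b unfolding J_def by force
qed

lemma upper_point: fixes x y :: "real^'d::finite"
  assumes "x \<in> set Z" "y \<in> set Z" "pm1_vec x" "pm1_vec y"
  shows "(\<Sum>i\<in>UNIV. (x $ i - y $ i)^2) \<le> 4 * (real CARD('d) - real (card (Jcols Z 1)) - real (card (Jcols Z (-1))))"
proof -
  define J where "J = Jcols Z 1 \<union> Jcols Z (-1)"
  have disj: "Jcols Z 1 \<inter> Jcols Z (-1) = {}" using assms(2) unfolding Jcols_def by force
  have cJ: "card J = card (Jcols Z 1) + card (Jcols Z (-1))" unfolding J_def using disj by (simp add: card_Un_disjoint)
  have "(\<Sum>i\<in>UNIV. (x $ i - y $ i)^2) \<le> (\<Sum>i\<in>UNIV. 4 * indicator (UNIV - J) i)"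
  proof (rule sum_mono)
    fix i
    show "(x $ i - y $ i)^2 \<le> 4 * indicator (UNIV - J) i"
    proof (cases "i \<in> J")
      case True then have "x $ i = y $ i" using assms(1,2) unfolding J_def Jcols_def by auto
      then show ?thesis using True by simp
    next
      case False
      have "x $ i = 1 \<or> x $ i = -1" "y $ i = 1 \<or> y $ i = -1" using assms(3,4) unfolding pm1_vec_def by auto
      then show ?thesis using False by auto
    qed
  qed
  also have "\<dots> = 4 * real (card (UNIV - J))" proof -
    have "(\<Sum>i\<in>(UNIV::'d set). indicator (UNIV - J) i :: real) = real (card (UNIV \<inter> (UNIV - J)))"
      by (simp add: indicator_def sum.If_cases Compl_eq_Diff_UNIV[symmetric] Collect_neg_eq)
    then show ?thesis by (simp add: sum_distrib_left[symmetric])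
  qed
  also have "card (UNIV - J) = CARD('d) - card J" by (simp add: card_Diff_subset)
  also have "real (CARD('d) - card J) = real CARD('d) - real (card J)"
    by (simp add: card_mono of_nat_diff)
  finally show ?thesis using cJ by simp
qed


lemma vsign_meas: "(vsign :: real^'d::finite \<Rightarrow> real^'d) \<in> borel_measurable borel"
proof (rule borel_measurable_euclidean_space[THEN iffD2], rule ballI)
  fix b :: "real^'d" assume "b \<in> Basis"
  then obtain i where b: "b = axis i 1" by (auto simp: Basis_vec_def)
  have "(\<lambda>x. vsign x \<bullet> b) = (\<lambda>x::real^'d. if 0 \<le> x$i then 1 else -1)" by (auto simp: b inner_axis vsign_def)
  then show "(\<lambda>x. vsign x \<bullet> b) \<in> borel_measurable borel" by simp
qed

lemma card_filter_sum: "finite J \<Longrightarrow> real (card {j\<in>J. P j}) = (\<Sum>j\<in>J. if P j then 1 else 0)"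
  by (simp add: sum.If_cases Int_def conj_commute)

lemma sa_meas: "{q::real^'d::finite. strongly_agrees q Z} \<in> sets borel"
proof -
  have eq: "strongly_agrees q Z \<longleftrightarrow>
     (0.9 * real (card (Jcols Z (-1))) \<le> (\<Sum>j\<in>Jcols Z (-1). if q$j = -1 then 1 else 0)) \<and>
     (0.9 * real (card (Jcols Z 1)) \<le> (\<Sum>j\<in>Jcols Z 1. if q$j = 1 then 1 else 0))" for q :: "real^'d"
    unfolding strongly_agrees_def by (simp add: card_filter_sum)
  have f: "(\<lambda>q::real^'d. \<Sum>j\<in>J. if q$j = b then 1 else (0::real)) \<in> borel_measurable borel" for J b
  proof (rule borel_measurable_sum)
    fix j show "(\<lambda>q::real^'d. if q$j = b then 1 else (0::real)) \<in> borel_measurable borel"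
      by measurable
  qed
  have "Measurable.pred borel (\<lambda>q::real^'d. strongly_agrees q Z)"
    unfolding eq by (rule pred_intros_logic(3); unfold pred_def; rule borel_measurable_le[OF borel_measurable_const f])
  then have "{q \<in> space borel. strongly_agrees q Z} \<in> sets borel" by (unfold pred_def)
  then show ?thesis by (simp only: space_borel UNIV_I simp_thms)
qed


theorem claim7p6:
  fixes n k m :: nat and lam z beta xi :: real
    and M :: "(real^'d::finite) list \<Rightarrow> (nat \<Rightarrow> real^'d) measure"
  assumes "k \<ge> 1"
    and "lam \<ge> 1" and "z \<ge> 1" and "0 < beta" and "beta \<le> 1" and "xi \<ge> 1"
    and "m = k * nat \<lfloor>1 + 40 powr (z / 2) * 2 * xi / real k\<rfloor>"
    and "n \<ge> m"
    and "clustering_mechanism n (k + 1) M"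
    and "approx_alg n (k + 1) z lam xi beta M"
  shows "weakly_accurate m k (1 / (160 * (2 * lam) powr (2 / z))) (beta / real (k + 1))
           (tilde_mech n m k M)"
proof -
  define d where "d = CARD('d)"
  define s where "s = 1 / sqrt (real d)"
  define al where "al = 1 / (160 * (2 * lam) powr (2 / z))"
  define L where "L = nat \<lfloor>1 + 40 powr (z / 2) * 2 * xi / real k\<rfloor>"
  have mL: "m = k * L" using assms(7) L_def by simp
  have y0: "40 powr (z / 2) * 2 * xi / real k \<ge> 0" using assms(1,6) by simp
  have Lge: "real L > 40 powr (z / 2) * 2 * xi / real k"
  proof -
    have "\<lfloor>1 + 40 powr (z / 2) * 2 * xi / real k\<rfloor> \<ge> 0" using y0 by simp
    then have "real L = real_of_int \<lfloor>1 + 40 powr (z / 2) * 2 * xi / real k\<rfloor>" unfolding L_def by simp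
    then show ?thesis by linarith
  qed
  have L1: "L \<ge> 1" using Lge y0 by linarith
  have mgt: "real m > 2 * xi * 40 powr (z / 2)"
  proof -
    have "real m = real k * real L" using mL by simp
    also have "\<dots> > real k * (40 powr (z / 2) * 2 * xi / real k)" using Lge assms(1) by (simp add: pos_divide_less_eq mult.commute)
    also have "real k * (40 powr (z / 2) * 2 * xi / real k) = 2 * xi * 40 powr (z / 2)" using assms(1) by simp
    finally show ?thesis .
  qed
  have dpos: "d > 0" unfolding d_def by simp
  have spos: "s > 0" unfolding s_def using dpos by simp
  have s2: "s^2 = 1 / real d" unfolding s_def using dpos by (simp add: power_divide)
  have pge1: "(2 * lam) powr (2 / z) \<ge> 1" using assms(2,3) by (intro ge_one_powr_ge_zero) auto
  have alpos: "al > 0" unfolding al_def using pge1 assms(2) by simp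
  have alle: "al \<le> 1 / 160" unfolding al_def using pge1 by (simp add: divide_le_eq_1)
  have key_pow: "lam * (4 * al) powr (z / 2) = (1 / 40) powr (z / 2) / 2"
  proof -
    have "4 * al = (1 / 40) / (2 * lam) powr (2 / z)" unfolding al_def by simp
    then have "(4 * al) powr (z / 2) = (1 / 40) powr (z / 2) / ((2 * lam) powr (2 / z)) powr (z / 2)"
      using assms(2) by (simp add: powr_divide powr_mult)
    also have "((2 * lam) powr (2 / z)) powr (z / 2) = 2 * lam" using assms(2,3) by (simp add: powr_powr)
    finally show ?thesis using assms(2) by simp
  qed
  have p40: "(1 / 40) powr (z / 2) * real m > 2 * xi"
  proof -
    have "(1 / 40 :: real) powr (z / 2) = 1 / 40 powr (z / 2)" by (simp add: powr_divide)
    then have "(1 / 40) powr (z / 2) * real m = real m / 40 powr (z / 2)" by simp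
    moreover have "40 powr (z / 2) > (0::real)" by simp
    ultimately show ?thesis using mgt by (simp add: pos_less_divide_eq mult.commute)
  qed
  show ?thesis unfolding weakly_accurate_def al_def[symmetric] d_def[symmetric]
  proof (intro allI impI)
    fix X :: "(real^'d) list"
    assume hX: "length X = m \<and> (\<forall>x\<in>set X. pm1_vec x) \<and>
        (\<forall>t<k. \<forall>b\<in>{-1, 1::real}. real (card (Jcols (block k t X) b)) \<ge> 1/2 * (1 - al) * real d)"
    have lenX: "length X = m" and pmX: "\<And>x. x \<in> set X \<Longrightarrow> pm1_vec x"
      and hJ: "\<And>t b. t < k \<Longrightarrow> b \<in> {-1, 1::real} \<Longrightarrow> real (card (Jcols (block k t X) b)) \<ge> 1/2 * (1 - al) * real d"
      using hX by auto
    have divL: "length X div k = L" using lenX mL assms(1) by simp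
    have lenB: "length (block k t X) = L" if "t < k" for t
    proof -
      have "t * L + L \<le> k * L" using that by (metis add.commute mult_Suc less_eq_Suc_le mult_le_mono1)
      then show ?thesis unfolding block_def divL using lenX mL by simp
    qed
    have subB: "set (block k t X) \<subseteq> set X" for t
      unfolding block_def by (meson order.trans set_drop_subset set_take_subset)
    have inB: "\<exists>t<k. x \<in> set (block k t X)" if xin: "x \<in> set X" for x
    proof -
      obtain p where p: "p < m" "X ! p = x" using xin lenX by (auto simp: in_set_conv_nth)
      define t where "t = p div L"
      define r where "r = p mod L"
      have rL: "r < L" unfolding r_def using L1 by simp
      have pe: "p = t * L + r" unfolding t_def r_def by simp
      have tk: "t < k" unfolding t_def using p(1) mL L1 by (simp add: less_mult_imp_div_less mult.commute)
      have "block k t X ! r = X ! (t * L + r)" unfolding block_def divL using rL pe p(1) lenX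
        by (simp add: nth_take nth_drop)
      then have "block k t X ! r = x" using pe p(2) by simp
      moreover have "r < length (block k t X)" using lenB[OF tk] rL by simp
      ultimately show ?thesis using tk nth_mem by blast
    qed
    have Jsum: "real (card (Jcols (block k t X) 1)) + real (card (Jcols (block k t X) (-1))) \<ge> (1 - al) * real d"
      if "t < k" for t
      using hJ[OF that, of 1] hJ[OF that, of "-1"] by simp
    define S where "S = map (\<lambda>x. (1 / sqrt (real CARD('d))) *\<^sub>R x) X @ replicate (n - m) (0::real^'d)"
    have S_alt: "S = map (\<lambda>x. s *\<^sub>R x) X @ replicate (n - m) 0" unfolding S_def s_def d_def by simp
    have normsx: "norm (s *\<^sub>R x) = 1" if "pm1_vec x" for x :: "real^'d"
    proof -
      have "(norm (s *\<^sub>R x))^2 = (\<Sum>i\<in>UNIV. (s * x $ i)^2)" using norm_sq_vec[of "s *\<^sub>R x"] by simp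
      also have "\<dots> = (\<Sum>i\<in>(UNIV::'d set). s^2)"
      proof (rule sum.cong)
        fix i :: 'd
        have "x $ i = 1 \<or> x $ i = -1" using that unfolding pm1_vec_def by auto
        then show "(s * x $ i)^2 = s^2" by (auto simp: power_mult_distrib)
      qed simp
      also have "\<dots> = 1" using s2 dpos unfolding d_def by simp
      finally have "(norm (s *\<^sub>R x))^2 = 1" .
      then show ?thesis using norm_ge_zero[of "s *\<^sub>R x"] by (simp add: power2_eq_1_iff del: norm_scaleR)
    qed
    have inS: "in_ball_data n S" unfolding in_ball_data_def S_alt
      using assms(8) lenX normsx pmX by auto
    define N where "N = M S"
    have probN: "prob_space N" and setsN: "sets N = sets borel"
      using assms(9) inS unfolding clustering_mechanism_def N_def by auto
    define G where "G = {C. cost_z (k + 1) z C S \<le> lam * opt_z (k + 1) z S + xi}"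
    have measG: "measure N G \<ge> beta" using assms(10) inS unfolding approx_alg_def G_def N_def by auto
    have Min_nonneg: "Min ((\<lambda>i. norm (x - C i) powr z) ` {..<k+1}) \<ge> 0" for x :: "real^'d" and C :: "nat \<Rightarrow> real^'d"
      by (rule Min.boundedI) auto
    have cost_nonneg: "cost_z (k+1) z C S \<ge> 0" for C :: "nat \<Rightarrow> real^'d"
      unfolding cost_z_def by (rule sum_list_nonneg) (auto intro!: Min.boundedI)
    have cost_split: "cost_z (k+1) z C S = (\<Sum>x\<leftarrow>X. Min ((\<lambda>i. norm (s *\<^sub>R x - C i) powr z) ` {..<k+1}))
        + real (n - m) * Min ((\<lambda>i. norm (0 - C i) powr z) ` {..<k+1})" for C :: "nat \<Rightarrow> real^'d"
      unfolding cost_z_def S_alt by (simp add: comp_def sum_list_replicate)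
    have sum_const: "(\<Sum>x\<leftarrow>X. c) = real m * c" for c :: real
      using lenX by (simp add: map_replicate_const sum_list_replicate)
    define C0 where "C0 = (\<lambda>i. if i < k then s *\<^sub>R hd (block k i X) else (0::real^'d))"
    have ptC0: "Min ((\<lambda>i. norm (s *\<^sub>R x - C0 i) powr z) ` {..<k+1}) \<le> (4*al) powr (z/2)" if xin: "x \<in> set X" for x
    proof -
      obtain t where tk: "t<k" and xt: "x \<in> set (block k t X)" using inB[OF xin] by blast
      have ne: "block k t X \<noteq> []" using lenB[OF tk] L1 by auto
      define y where "y = hd (block k t X)"
      have yt: "y \<in> set (block k t X)" using ne unfolding y_def by simp
      have c0t: "C0 t = s *\<^sub>R y" unfolding C0_def y_def using tk by simp
      have "Min ((\<lambda>i. norm (s *\<^sub>R x - C0 i) powr z) ` {..<k+1}) \<le> norm (s *\<^sub>R x - C0 t) powr z"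
        by (rule Min_le) (use tk in auto)
      also have "norm (s *\<^sub>R x - C0 t) powr z = ((norm (s *\<^sub>R x - s *\<^sub>R y))^2) powr (z/2)"
        unfolding c0t by (rule powr_sq) simp
      also have "\<dots> \<le> (4*al) powr (z/2)"
      proof (rule powr_mono2)
        have e1: "(s * x$i - s * y$i)^2 = s^2 * (x$i - y$i)^2" for i by (simp add: power2_eq_square algebra_simps)
        have "(norm (s *\<^sub>R x - s *\<^sub>R y))^2 = (\<Sum>i\<in>UNIV. (s * x$i - s * y$i)^2)"
          using norm_sq_vec[of "s *\<^sub>R x - s *\<^sub>R y"] by simp
        also have "\<dots> = s^2 * (\<Sum>i\<in>UNIV. (x$i - y$i)^2)" by (simp add: e1 sum_distrib_left)
        also have "\<dots> \<le> s^2 * (4 * (real d - real (card (Jcols (block k t X) 1)) - real (card (Jcols (block k t X) (-1)))))"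
          using upper_point[OF xt yt pmX pmX] subB xt yt unfolding d_def by (intro mult_left_mono) auto
        also have "\<dots> \<le> s^2 * (4 * (al * real d))" using Jsum[OF tk] by (intro mult_left_mono) (auto simp: algebra_simps)
        also have "\<dots> = 4 * al" using s2 dpos by simp
        finally show "(norm (s *\<^sub>R x - s *\<^sub>R y))^2 \<le> 4 * al" .
      qed (use assms(3) in auto)
      finally show ?thesis .
    qed
    have costC0: "cost_z (k+1) z C0 S \<le> real m * (4*al) powr (z/2)"
    proof -
      have "Min ((\<lambda>i. norm (0 - C0 i) powr z) ` {..<k+1}) \<le> norm (0 - C0 k) powr z" by (rule Min_le) auto
      then have z0: "Min ((\<lambda>i. norm (0 - C0 i) powr z) ` {..<k+1}) \<le> 0" unfolding C0_def by simp
      have "cost_z (k+1) z C0 S \<le> (\<Sum>x\<leftarrow>X. (4*al) powr (z/2)) + real (n - m) * 0"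
        unfolding cost_split by (intro add_mono sum_list_mono ptC0 mult_left_mono z0) auto
      then show ?thesis using sum_const by simp
    qed
    have optle: "opt_z (k+1) z S \<le> cost_z (k+1) z C0 S"
      unfolding opt_z_def by (rule cINF_lower) (use cost_nonneg[simplified] in \<open>auto intro!: bdd_belowI2[where m=0]\<close>)
    have ptlow: "Min ((\<lambda>i. norm (s *\<^sub>R x - C i) powr z) ` {..<k+1}) \<ge> (1/40) powr (z/2)"
      if xin: "x \<in> set X" and bad: "\<forall>i\<le>k. \<forall>t<k. \<not> strongly_agrees (vsign (C i)) (block k t X)" for x C
    proof (rule Min.boundedI)
      show "finite ((\<lambda>i. norm (s *\<^sub>R x - C i) powr z) ` {..<k+1})" by simp
      show "(\<lambda>i. norm (s *\<^sub>R x - C i) powr z) ` {..<k+1} \<noteq> {}" by auto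
      fix v assume "v \<in> (\<lambda>i. norm (s *\<^sub>R x - C i) powr z) ` {..<k+1}"
      then obtain i where i: "i < k+1" and v: "v = norm (s *\<^sub>R x - C i) powr z" by auto
      obtain t where tk: "t<k" and xt: "x \<in> set (block k t X)" using inB[OF xin] by blast
      have nb: "\<not> strongly_agrees (vsign (C i)) (block k t X)" using bad i tk by auto
      obtain b where b: "b \<in> {-1,1::real}"
        and nl: "(norm (s *\<^sub>R x - C i))^2 \<ge> 0.1 * real (card (Jcols (block k t X) b)) * s^2"
        using lower_point[OF xt nb spos] by blast
      have le1: "0.1 * real (card (Jcols (block k t X) b)) * s^2 \<ge> 0.1 * (1/2 * (1-al) * real d) * s^2"
        using hJ[OF tk b] by (intro mult_right_mono) (auto simp: mult.commute)
      have eq1: "0.1 * (1/2 * (1-al) * real d) * s^2 = (1-al)/20" using s2 dpos by (simp add: field_simps)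
      have "0.1 * (1/2 * (1-al) * real d) * s^2 \<le> (norm (s *\<^sub>R x - C i))^2" using le1 nl by (rule order.trans)
      then have "(1-al)/20 \<le> (norm (s *\<^sub>R x - C i))^2" unfolding eq1 .
      moreover have "1/40 \<le> (1-al)/(20::real)" using alle by simp
      ultimately have "(norm (s *\<^sub>R x - C i))^2 \<ge> 1/40" by (rule order.trans[rotated])
      then have "((norm (s *\<^sub>R x - C i))^2) powr (z/2) \<ge> (1/40) powr (z/2)"
        by (intro powr_mono2) (use assms(3) in auto)
      then show "(1/40) powr (z/2) \<le> v" unfolding v using powr_sq[of "norm (s *\<^sub>R x - C i)" z] by simp
    qed
    have costlow: "cost_z (k+1) z C S \<ge> real m * (1/40) powr (z/2)"
      if bad: "\<forall>i\<le>k. \<forall>t<k. \<not> strongly_agrees (vsign (C i)) (block k t X)" for C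
    proof -
      have "(\<Sum>x\<leftarrow>X. (1/40) powr (z/2)) + real (n - m) * 0 \<le> cost_z (k+1) z C S"
        unfolding cost_split by (intro add_mono sum_list_mono ptlow[OF _ bad] mult_left_mono Min_nonneg) auto
      then show ?thesis using sum_const by simp
    qed
    have good: "\<exists>i\<le>k. \<exists>t<k. strongly_agrees (vsign (C i)) (block k t X)" if CG: "C \<in> G" for C
    proof (rule ccontr)
      assume "\<not> ?thesis"
      then have bad: "\<forall>i\<le>k. \<forall>t<k. \<not> strongly_agrees (vsign (C i)) (block k t X)" by auto
      define Q where "Q = (1/40::real) powr (z/2)"
      have c1: "cost_z (k+1) z C S \<le> lam * opt_z (k+1) z S + xi" using CG unfolding G_def by simp
      have "lam * opt_z (k+1) z S \<le> lam * (real m * (4*al) powr (z/2))"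
        using optle costC0 assms(2) by (intro mult_left_mono) auto
      also have "\<dots> = real m * Q / 2" using key_pow unfolding Q_def by (metis mult.left_commute times_divide_eq_right)
      finally have c2: "lam * opt_z (k+1) z S \<le> real m * Q / 2" .
      have c3: "real m * Q \<le> cost_z (k+1) z C S" using costlow[OF bad] unfolding Q_def .
      have c4: "real m * Q > 2 * xi" using p40 unfolding Q_def by (simp add: mult.commute)
      show False using c1 c2 c3 c4 by linarith
    qed
    define U where "U = uniform_count_measure {0..k}"
    define P where "P = N \<Otimes>\<^sub>M U"
    define F where "F = (\<lambda>(C::nat \<Rightarrow> real^'d, j::nat). vsign (C j))"
    define A where "A = {q::real^'d. \<exists>t<k. strongly_agrees q (block k t X)}"
    have tm: "tilde_mech n m k M X = distr P borel F"
      unfolding tilde_mech_def P_def U_def F_def N_def S_def by simp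
    have probU: "prob_space U" unfolding U_def by (rule prob_space_uniform_count_measure) auto
    have spaceU: "space U = {0..k}" unfolding U_def by (simp add: space_uniform_count_measure)
    have probP: "prob_space P" unfolding P_def by (rule prob_space_pair[OF probN probU])
    have Ameas: "A \<in> sets borel"
    proof -
      have u: "(\<Union>t\<in>{..<k}. {q::real^'d. strongly_agrees q (block k t X)}) \<in> sets borel"
        by (rule sets.finite_UN) (auto intro: sa_meas)
      have eq: "A = (\<Union>t\<in>{..<k}. {q::real^'d. strongly_agrees q (block k t X)})" unfolding A_def by auto
      show ?thesis unfolding eq by (rule u)
    qed
    have Fmeas: "F \<in> P \<rightarrow>\<^sub>M borel"
    proof -
      have Feq: "F = (\<lambda>x. (\<lambda>i x. vsign (fst x i)) (snd x) x)" unfolding F_def by auto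
      have mc: "measurable P U = measurable P (count_space {0..k})"
        by (rule measurable_cong_sets) (simp_all add: U_def sets_uniform_count_measure_count_space)
      have "snd \<in> P \<rightarrow>\<^sub>M U" unfolding P_def by (rule measurable_snd)
      then have g: "snd \<in> P \<rightarrow>\<^sub>M count_space {0..k}" using mc by simp
      have mN: "measurable N borel = measurable borel (borel :: (real^'d) measure)"
        by (rule measurable_cong_sets[OF setsN refl])
      have fi: "(\<lambda>x. vsign (fst x i)) \<in> P \<rightarrow>\<^sub>M borel" for i
      proof -
        have c: "(\<lambda>C::nat \<Rightarrow> real^'d. C i) \<in> N \<rightarrow>\<^sub>M borel" unfolding mN by (rule measurable_product_coordinates)
        have f1: "fst \<in> P \<rightarrow>\<^sub>M N" unfolding P_def by (rule measurable_fst)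
        have e: "(\<lambda>x. vsign (fst x i)) = vsign \<circ> ((\<lambda>C. C i) \<circ> fst)" by auto
        show ?thesis unfolding e by (rule measurable_comp[OF measurable_comp[OF f1 c] vsign_meas])
      qed
      show ?thesis unfolding Feq by (rule measurable_compose_countable'[OF fi g]) auto
    qed
    have Gsets: "G \<in> sets N" using measG assms(4) measure_notin_sets[of G N] by force
    define E where "E = F -` A \<inter> space P"
    have Esets: "E \<in> sets P" unfolding E_def by (rule measurable_sets[OF Fmeas Ameas])
    have emE: "emeasure P E = (\<integral>\<^sup>+C. emeasure U (Pair C -` E) \<partial>N)"
      using sigma_finite_measure.emeasure_pair_measure_alt[OF prob_space_imp_sigma_finite[OF probU], of E N] Esets
      unfolding P_def by simp
    have pt: "ennreal (1 / real (k+1)) * indicator G C \<le> emeasure U (Pair C -` E)" if CN: "C \<in> space N" for C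
    proof (cases "C \<in> G")
      case False then show ?thesis by simp
    next
      case True
      obtain i t where i: "i \<le> k" "t < k" "strongly_agrees (vsign (C i)) (block k t X)" using good[OF True] by blast
      have iin: "i \<in> Pair C -` E" unfolding E_def P_def F_def A_def using CN i by (auto simp: space_pair_measure spaceU)
      have sub: "Pair C -` E \<subseteq> {0..k}" unfolding E_def P_def by (auto simp: space_pair_measure spaceU)
      have fin: "finite (Pair C -` E)" using sub finite_subset by blast
      have cge: "card (Pair C -` E) \<ge> 1" using iin fin by (metis One_nat_def Suc_leI card_gt_0_iff empty_iff)
      have "emeasure U (Pair C -` E) = ennreal (real (card (Pair C -` E)) / real (card {0..k}))"
        unfolding U_def by (rule emeasure_uniform_count_measure[OF _ sub]) simp
      then have "emeasure U (Pair C -` E) = ennreal (real (card (Pair C -` E)) / real (k+1))" by simp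
      moreover have "1 / real (k+1) \<le> real (card (Pair C -` E)) / real (k+1)" using cge by (simp add: divide_right_mono)
      ultimately show ?thesis using True by (simp add: ennreal_leI)
    qed
    have "(\<integral>\<^sup>+C. ennreal (1 / real (k+1)) * indicator G C \<partial>N) \<le> (\<integral>\<^sup>+C. emeasure U (Pair C -` E) \<partial>N)"
      by (rule nn_integral_mono) (rule pt)
    then have i1: "ennreal (1 / real (k+1)) * emeasure N G \<le> emeasure P E"
      using emE nn_integral_cmult_indicator[OF Gsets] by simp
    have i2: "emeasure N G = ennreal (measure N G)" using finite_measure.emeasure_eq_measure[OF prob_space.finite_measure[OF probN]] by simp
    have i3: "emeasure P E = ennreal (measure P E)" using finite_measure.emeasure_eq_measure[OF prob_space.finite_measure[OF probP]] by simp
    have "ennreal (1 / real (k+1) * measure N G) \<le> ennreal (measure P E)"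
      using i1 unfolding i2 i3 ennreal_mult''[OF measure_nonneg, symmetric] .
    then have "1 / real (k+1) * measure N G \<le> measure P E" by (simp add: ennreal_le_iff)
    moreover have "beta / real (k+1) \<le> 1 / real (k+1) * measure N G" using measG by (simp add: divide_right_mono)
    moreover have "measure (tilde_mech n m k M X) A = measure P E"
      unfolding tm E_def by (rule measure_distr[OF Fmeas Ameas])
    ultimately show "measure (tilde_mech n m k M X) {q. \<exists>t<k. strongly_agrees q (block k t X)} \<ge> beta / real (k + 1)"
      unfolding A_def by linarith
  qed
qed

end
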